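(* Let $N\ge 4$ be even and let $P_1,\dots,P_N$ be an $N$-periodic billiard trajectory in $E$. For $j=1,2$ let $P_{j,i}^{-1}$ be the inversion of $P_i$ in the unit circle centered at $f_j$, i.e. $P_{j,i}^{-1}=f_j+\dfrac{P_i-f_j}{|P_i-f_j|^2}$, and let $A_j^\dagger$ be the signed area of the polygon $P_{j,1}^{-1},\dots,P_{j,N}^{-1}$. Then $A_1^\dagger=A_2^\dagger$, i.e. $A_1^\dagger/A_2^\dagger=1$.
   Context: Let $E$ be the ellipse $x^2/a^2+y^2/b^2=1$ with $a>b>0$, center $O=(0,0)$ and foci $f_1=(-\sqrt{a^2-b^2},0)$, $f_2=(\sqrt{a^2-b^2},0)$. An $N$-periodic billiard trajectory is a convex polygon with vertices $P_1,\dots,P_N\in E$ (indices mod $N$), listed counterclockwise and winding once around $O$, with $P_i\neq P_{i+1}$, such that at every vertex $P_i$ the normal line to $E$ at $P_i$ bisects the angle $\angle P_{i-1}P_iP_{i+1}$, and all of whose sides are tangent to a common ellipse confocal with $E$. The signed area of a polygon with vertices $W_i=(x_i,y_i)$, $i=1,\dots,N$ (indices mod $N$), is $S=\tfrac12\sum_{i=1}^N (x_iy_{i+1}-x_{i+1}y_i)$. *)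

theory Defs
  imports "HOL-Analysis.Analysis"
begin

type_synonym pt = "real \<times> real"

definition on_ellipse :: "real \<Rightarrow> real \<Rightarrow> pt \<Rightarrow> bool" where
  "on_ellipse a b p \<longleftrightarrow> (fst p)\<^sup>2 / a\<^sup>2 + (snd p)\<^sup>2 / b\<^sup>2 = 1"

definition cross2 :: "pt \<Rightarrow> pt \<Rightarrow> real" where
  "cross2 u v = fst u * snd v - snd u * fst v"

definition len2 :: "pt \<Rightarrow> real" where
  "len2 u = sqrt ((fst u)\<^sup>2 + (snd u)\<^sup>2)"

definition focus1 :: "real \<Rightarrow> real \<Rightarrow> pt" where
  "focus1 a b = (- sqrt (a\<^sup>2 - b\<^sup>2), 0)"

definition focus2 :: "real \<Rightarrow> real \<Rightarrow> pt" where
  "focus2 a b = (sqrt (a\<^sup>2 - b\<^sup>2), 0)"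

text \<open>Normal direction of the ellipse at p: gradient (x/a^2, y/b^2).
  The normal line at P bisects the angle P(i-1) P P(i+1): the sum of the
  unit vectors towards the neighbours is a nonzero vector on the normal line.\<close>
definition normal_bisects :: "real \<Rightarrow> real \<Rightarrow> pt \<Rightarrow> pt \<Rightarrow> pt \<Rightarrow> bool" where
  "normal_bisects a b p q r \<longleftrightarrow>
     (let u = (q - p) /\<^sub>R len2 (q - p); w = (r - p) /\<^sub>R len2 (r - p);
          n = (fst p / a\<^sup>2, snd p / b\<^sup>2)
      in u + w \<noteq> 0 \<and> cross2 (u + w) n = 0)"

definition line_tangent_ellipse :: "real \<Rightarrow> real \<Rightarrow> pt \<Rightarrow> pt \<Rightarrow> bool" where
  "line_tangent_ellipse al be p q \<longleftrightarrow>
     (\<exists>!z. (\<exists>t::real. z = p + t *\<^sub>R (q - p)) \<and> (fst z)\<^sup>2 / al + (snd z)\<^sup>2 / be = 1)"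

text \<open>Ellipses confocal with x^2/a^2+y^2/b^2=1 are x^2/(a^2-l)+y^2/(b^2-l)=1, l < b^2.\<close>
definition billiard_trajectory :: "real \<Rightarrow> real \<Rightarrow> nat \<Rightarrow> (nat \<Rightarrow> pt) \<Rightarrow> bool" where
  "billiard_trajectory a b N P \<longleftrightarrow>
     (\<forall>i<N. on_ellipse a b (P i)) \<and>
     (\<forall>i<N. P i \<noteq> P (Suc i mod N)) \<and>
     \<comment> \<open>convex, counterclockwise, winding once around O\<close>
     (\<exists>\<theta>::nat \<Rightarrow> real. (\<forall>i<N. P i = (a * cos (\<theta> i), b * sin (\<theta> i))) \<and>
        (\<forall>i. Suc i < N \<longrightarrow> \<theta> i < \<theta> (Suc i)) \<and> \<theta> (N - 1) < \<theta> 0 + 2 * pi) \<and>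
     (\<forall>i<N. normal_bisects a b (P i) (P ((i + N - 1) mod N)) (P (Suc i mod N))) \<and>
     (\<exists>l. l < b\<^sup>2 \<and> (\<forall>i<N. line_tangent_ellipse (a\<^sup>2 - l) (b\<^sup>2 - l) (P i) (P (Suc i mod N))))"

definition inversion :: "pt \<Rightarrow> pt \<Rightarrow> pt" where
  "inversion f p = f + (1 / ((fst (p - f))\<^sup>2 + (snd (p - f))\<^sup>2)) *\<^sub>R (p - f)"

definition signed_area :: "nat \<Rightarrow> (nat \<Rightarrow> pt) \<Rightarrow> real" where
  "signed_area N W = (1/2) * (\<Sum>i<N. fst (W i) * snd (W (Suc i mod N)) - fst (W (Suc i mod N)) * snd (W i))"

end

theory Submission
  imports Defs
begin


lemma quad_disc:
  fixes al be ga :: real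
  assumes "al \<noteq> 0" and ex: "al * t0^2 + be * t0 + ga = 0"
    and uniq: "\<And>t. al * t^2 + be * t + ga = 0 \<Longrightarrow> t = t0"
  shows "be^2 = 4 * al * ga"
proof -
  define t1 where "t1 = - be / al - t0"
  have "al * t1^2 + be * t1 + ga = al * t0^2 + be * t0 + ga"
    unfolding t1_def using assms(1) by (simp add: field_simps power2_eq_square)
  hence "t1 = t0" using ex by (intro uniq) simp
  hence "be = - 2 * al * t0" unfolding t1_def using assms(1) by (simp add: field_simps)
  thus ?thesis using ex by (simp add: power2_eq_square algebra_simps)
qed

definition Tc :: "real \<Rightarrow> real \<Rightarrow> real \<Rightarrow> real \<Rightarrow> real \<Rightarrow> bool" where
  "Tc a b l x y \<longleftrightarrow> a^2 * b^2 * (1 - cos (y - x)) = l * (a^2 * (1 - cos (x + y)) + b^2 * (1 + cos (x + y)))"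

lemma disc_alg:
  fixes A B p1 p2 r1 r2 :: real
  assumes A: "A > 0" and B: "B > 0"
    and h: "(2 * (p1 * r1 / A + p2 * r2 / B))^2 = 4 * (r1^2 / A + r2^2 / B) * (p1^2 / A + p2^2 / B - 1)"
  shows "B * r1^2 + A * r2^2 = (p1 * r2 - p2 * r1)^2"
proof -
  have e1: "(2 * (p1 * r1 / A + p2 * r2 / B))^2 = 4 * (p1 * r1 * B + p2 * r2 * A)^2 / (A^2 * B^2)"
    using A B by (simp add: field_simps power2_eq_square)
  have e2: "4 * (r1^2 / A + r2^2 / B) * (p1^2 / A + p2^2 / B - 1) = 4 * ((r1^2 * B + r2^2 * A) * (p1^2 * B + p2^2 * A - A * B)) / (A^2 * B^2)"
    using A B by (simp add: field_simps power2_eq_square)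
  have "(p1 * r1 * B + p2 * r2 * A)^2 = (r1^2 * B + r2^2 * A) * (p1^2 * B + p2^2 * A - A * B)"
    using h A B unfolding e1 e2 by (simp add: field_simps)
  hence "A * B * (B * r1^2 + A * r2^2 - (p1 * r2 - p2 * r1)^2) = 0"
    by (simp add: algebra_simps power2_eq_square)
  thus ?thesis using A B by simp
qed

lemma tangent_disc:
  fixes A B :: real and p r :: pt
  assumes A: "A > 0" and B: "B > 0" and r: "r \<noteq> 0"
    and tan: "line_tangent_ellipse A B p (p + r)"
  shows "B * (fst r)^2 + A * (snd r)^2 = (fst p * snd r - snd p * fst r)^2"
proof -
  define al where "al = (fst r)^2 / A + (snd r)^2 / B"
  define be where "be = 2 * (fst p * fst r / A + snd p * snd r / B)"
  define ga where "ga = (fst p)^2 / A + (snd p)^2 / B - 1"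
  have eq: "(fst (p + t *\<^sub>R r))\<^sup>2 / A + (snd (p + t *\<^sub>R r))\<^sup>2 / B = 1 \<longleftrightarrow> al * t^2 + be * t + ga = 0" for t
  proof -
    have "al * t^2 + be * t + ga = (fst (p + t *\<^sub>R r))\<^sup>2 / A + (snd (p + t *\<^sub>R r))\<^sup>2 / B - 1"
      unfolding al_def be_def ga_def using A B
      by (simp add: field_simps power2_eq_square)
    thus ?thesis by linarith
  qed
  have alpos: "al > 0"
  proof -
    have "fst r \<noteq> 0 \<or> snd r \<noteq> 0" using r by (simp add: prod_eq_iff)
    thus ?thesis unfolding al_def using A B
      by (auto intro: add_pos_nonneg add_nonneg_pos)
  qed
  from tan obtain z where z: "(\<exists>t::real. z = p + t *\<^sub>R (p + r - p)) \<and> (fst z)\<^sup>2 / A + (snd z)\<^sup>2 / B = 1"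
    and zu: "\<And>w. (\<exists>t::real. w = p + t *\<^sub>R (p + r - p)) \<and> (fst w)\<^sup>2 / A + (snd w)\<^sup>2 / B = 1 \<Longrightarrow> w = z"
    unfolding line_tangent_ellipse_def by blast
  from z obtain t0 where t0: "z = p + t0 *\<^sub>R r" by auto
  have r0: "al * t0^2 + be * t0 + ga = 0" using z t0 eq by simp
  have "be^2 = 4 * al * ga"
  proof (rule quad_disc[OF _ r0])
    show "al \<noteq> 0" using alpos by simp
    fix t assume "al * t^2 + be * t + ga = 0"
    hence "p + t *\<^sub>R r = z" using zu eq[of t] by auto
    hence "t *\<^sub>R r = t0 *\<^sub>R r" using t0 by simp
    thus "t = t0" using r by (simp add: scaleR_cancel_right)
  qed
  hence "(2 * (fst p * fst r / A + snd p * snd r / B))^2 = 4 * ((fst r)^2 / A + (snd r)^2 / B) * ((fst p)^2 / A + (snd p)^2 / B - 1)"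
    unfolding al_def be_def ga_def .
  thus ?thesis using disc_alg[OF A B] by blast
qed

lemma tangent_T:
  fixes a b l x y :: real
  assumes ab: "a > b" "b > 0" and l: "l < b^2"
    and pq: "(a * cos x, b * sin x) \<noteq> (a * cos y, b * sin y)"
    and tan: "line_tangent_ellipse (a^2 - l) (b^2 - l) (a * cos x, b * sin x) (a * cos y, b * sin y)"
  shows "Tc a b l x y" and "cos (y - x) < 1"
proof -
  define cx sx cy sy where "cx = cos x" "sx = sin x" "cy = cos y" "sy = sin y"
  define c' where "c' = cos (y - x)"
  define C where "C = cos (x + y)"
  have c'e: "c' = cy * cx + sy * sx" and Ce: "C = cx * cy - sx * sy"
    unfolding c'_def C_def cx_sx_cy_sy_def by (simp_all add: cos_diff cos_add)
  have px: "sx^2 + cx^2 = 1" "sy^2 + cy^2 = 1" unfolding cx_sx_cy_sy_def by simp_all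
  have "b^2 < a^2" using ab by (simp add: power_strict_mono)
  hence A: "a^2 - l > 0" using l by linarith
  have B: "b^2 - l > 0" using l by simp
  have r: "(a * cos y, b * sin y) - (a * cos x, b * sin x) \<noteq> 0" using pq by (auto simp: zero_prod_def)
  have "line_tangent_ellipse (a^2 - l) (b^2 - l) (a * cos x, b * sin x) ((a * cos x, b * sin x) + ((a * cos y, b * sin y) - (a * cos x, b * sin x)))"
    using tan by simp
  from tangent_disc[OF A B r this]
  have E: "(b^2 - l) * (a * (cy - cx))^2 + (a^2 - l) * (b * (sy - sx))^2 = (a * cx * (b * (sy - sx)) - b * sx * (a * (cy - cx)))^2"
    unfolding cx_sx_cy_sy_def by (simp add: right_diff_distrib)
  have i1: "(cy - cx)^2 = (1 - C) * (1 - c')" unfolding c'e Ce using px by algebra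
  have i2: "(sy - sx)^2 = (1 + C) * (1 - c')" unfolding c'e Ce using px by algebra
  have i3: "(cx * sy - sx * cy)^2 = (1 - c') * (1 + c')" unfolding c'e Ce using px by algebra
  have "(a * cx * (b * (sy - sx)) - b * sx * (a * (cy - cx)))^2 = a^2 * b^2 * (cx * sy - sx * cy)^2"
    by (simp add: algebra_simps power2_eq_square)
  moreover have "(a * (cy - cx))^2 = a^2 * (cy-cx)^2" "(b*(sy-sx))^2 = b^2*(sy-sx)^2"
    by (simp_all add: power_mult_distrib)
  ultimately have E2: "(b^2 - l) * a^2 * (cy - cx)^2 + (a^2 - l) * b^2 * (sy - sx)^2 = a^2 * b^2 * (cx * sy - sx * cy)^2"
    using E by (simp only: mult.assoc)
  have nz: "1 - c' > 0"
  proof -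
    have "cx \<noteq> cy \<or> sx \<noteq> sy" using pq ab unfolding cx_sx_cy_sy_def by auto
    hence "(cx - cy)^2 + (sx - sy)^2 > 0" by (auto intro: add_pos_nonneg add_nonneg_pos)
    moreover have "(cx - cy)^2 + (sx - sy)^2 = 2 * (1 - c')" unfolding c'e using px by algebra
    ultimately show ?thesis by simp
  qed
  thus "cos (y - x) < 1" unfolding c'_def by simp
  from E2 have "(1 - c') * ((b^2 - l) * a^2 * (1 - C) + (a^2 - l) * b^2 * (1 + C) - a^2 * b^2 * (1 + c')) = 0"
    unfolding i1 i2 i3 by (simp add: algebra_simps)
  with nz have "(b^2 - l) * a^2 * (1 - C) + (a^2 - l) * b^2 * (1 + C) - a^2 * b^2 * (1 + c') = 0" by simp
  hence "a^2 * b^2 * (1 - c') = l * (a^2 * (1 - C) + b^2 * (1 + C))" by (simp add: algebra_simps)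
  thus "Tc a b l x y" unfolding Tc_def c'_def C_def .
qed



lemma c1: "0 \<le> 1 + cos (t::real)" using cos_ge_minus_one[of t] by linarith
lemma c2: "0 \<le> 1 - cos (t::real)" using cos_le_one[of t] by linarith
lemma c3: "0 \<le> (a::real)^2 * (1 - cos t) + b^2 * (1 + cos t)"
  by (intro add_nonneg_nonneg mult_nonneg_nonneg c1 c2 zero_le_power2)

lemma Tc_swap: "Tc a b l x y \<Longrightarrow> Tc a b l y (x + 2 * pi)"
proof -
  assume "Tc a b l x y"
  moreover have "cos (x + 2 * pi - y) = cos (y - x)"
  proof -
    have "cos (x + 2 * pi - y) = cos ((x - y) + 2 * pi)" by (simp add: algebra_simps)
    also have "\<dots> = cos (y - x)" by (metis cos_periodic cos_minus minus_diff_eq)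
    finally show ?thesis .
  qed
  moreover have "cos (y + (x + 2 * pi)) = cos (x + y)"
  proof -
    have "cos (y + (x + 2 * pi)) = cos ((x + y) + 2 * pi)" by (simp add: algebra_simps)
    also have "\<dots> = cos (x + y)" by (rule cos_periodic)
    finally show ?thesis .
  qed
  ultimately show ?thesis unfolding Tc_def by simp
qed

lemma Tc_shift: "Tc a b l x y \<Longrightarrow> Tc a b l (x - pi) (y - pi)"
proof -
  assume "Tc a b l x y"
  moreover have "cos (x - pi + (y - pi)) = cos (x + y)"
  proof -
    have "cos (x - pi + (y - pi)) = cos (x - pi + (y - pi) + 2 * pi)" by (rule cos_periodic[symmetric])
    also have "x - pi + (y - pi) + 2 * pi = x + y" by simp
    finally show ?thesis .
  qed
  ultimately show ?thesis unfolding Tc_def by (simp add: algebra_simps)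
qed

lemma Tc_lpos:
  assumes "a > 0" "b > 0" "Tc a b l x y" "cos (y - x) < 1"
  shows "l > 0"
proof -
  have "a^2 * b^2 * (1 - cos (y - x)) > 0" using assms by simp
  hence "l * (a^2 * (1 - cos (x + y)) + b^2 * (1 + cos (x + y))) > 0" using assms(3) unfolding Tc_def by simp
  moreover have "a^2 * (1 - cos (x + y)) + b^2 * (1 + cos (x + y)) \<ge> 0"
    by (rule c3)
  ultimately show ?thesis by (smt (verit) mult_nonpos_nonneg)
qed

lemma Tc_not_pi:
  assumes "a > b" "b > 0" "l < b^2" "Tc a b l x y"
  shows "y - x \<noteq> pi"
proof
  assume "y - x = pi"
  hence E: "a^2 * b^2 * 2 = l * (a^2 * (1 - cos (x + y)) + b^2 * (1 + cos (x + y)))"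
    using assms(4) unfolding Tc_def by simp
  have ba: "b^2 < a^2" using assms by (simp add: power_strict_mono)
  have le: "a^2 * (1 - cos (x + y)) + b^2 * (1 + cos (x + y)) \<le> a^2 * 2"
    using ba c1[of "x+y"] mult_right_mono[of "b^2" "a^2" "1 + cos (x + y)"]
    by (simp add: algebra_simps)
  show False
  proof (cases "l \<ge> 0")
    case True
    have "l * (a^2 * (1 - cos (x + y)) + b^2 * (1 + cos (x + y))) \<le> l * (a^2 * 2)"
      using True le by (rule mult_left_mono[rotated])
    moreover have "l * (a^2 * 2) < b^2 * (a^2 * 2)" using True assms(1,2,3)
      by (intro mult_strict_right_mono) auto
    ultimately show False using E by (simp add: algebra_simps)
  next
    case False
    have "l * (a^2 * (1 - cos (x + y)) + b^2 * (1 + cos (x + y))) \<le> 0"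
      using False c3 by (intro mult_nonpos_nonneg) auto
    moreover have "a^2 * b^2 * 2 > 0" using assms by simp
    ultimately show False using E by linarith
  qed
qed



definition sfun :: "real \<Rightarrow> real \<Rightarrow> real \<Rightarrow> real \<Rightarrow> real" where
  "sfun a b l m = l * (a^2 * (sin m)^2 + b^2 * (cos m)^2) / (a^2 * b^2)"

definition Dfun :: "real \<Rightarrow> real \<Rightarrow> real \<Rightarrow> real \<Rightarrow> real" where
  "Dfun a b l m = arcsin (sqrt (sfun a b l m))"

lemma H_bounds:
  fixes a b m :: real
  assumes "a > b" "b > 0"
  shows "b^2 \<le> a^2 * (sin m)^2 + b^2 * (cos m)^2" "a^2 * (sin m)^2 + b^2 * (cos m)^2 \<le> a^2"
proof -
  have ba: "b^2 \<le> a^2" using assms by (simp add: power_mono)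
  have "b^2 = b^2 * ((sin m)^2 + (cos m)^2)" by simp
  hence "b^2 = b^2 * (sin m)^2 + b^2 * (cos m)^2" by (simp only: distrib_left)
  moreover have "b^2 * (sin m)^2 \<le> a^2 * (sin m)^2" using ba by (simp add: mult_right_mono)
  ultimately show "b^2 \<le> a^2 * (sin m)^2 + b^2 * (cos m)^2" by linarith
  have "a^2 = a^2 * ((sin m)^2 + (cos m)^2)" by simp
  hence "a^2 = a^2 * (sin m)^2 + a^2 * (cos m)^2" by (simp only: distrib_left)
  moreover have "b^2 * (cos m)^2 \<le> a^2 * (cos m)^2" using ba by (simp add: mult_right_mono)
  ultimately show "a^2 * (sin m)^2 + b^2 * (cos m)^2 \<le> a^2" by linarith
qed

lemma s_bounds:
  assumes "a > b" "b > 0" "l > 0" "l < b^2"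
  shows "0 < sfun a b l m" "sfun a b l m < 1"
proof -
  note H = H_bounds[OF assms(1,2), of m]
  have b2: "b^2 > 0" using assms by simp
  have Hp: "a^2 * (sin m)^2 + b^2 * (cos m)^2 > 0" using H b2 by linarith
  show "0 < sfun a b l m" unfolding sfun_def using Hp assms by simp
  have "l * (a^2 * (sin m)^2 + b^2 * (cos m)^2) < b^2 * a^2"
  proof -
    have "l * (a^2 * (sin m)^2 + b^2 * (cos m)^2) < b^2 * (a^2 * (sin m)^2 + b^2 * (cos m)^2)"
      using Hp assms by simp
    also have "\<dots> \<le> b^2 * a^2" using H b2 by simp
    finally show ?thesis .
  qed
  thus "sfun a b l m < 1" unfolding sfun_def using assms by (simp add: field_simps)
qed

lemma Tc_D:
  assumes "a > b" "b > 0" "l > 0" "l < b^2" "Tc a b l x y" "0 < y - x" "y - x < pi"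
  shows "(y - x) / 2 = Dfun a b l ((x + y) / 2)"
proof -
  define d m where "d = (y - x) / 2" "m = (x + y) / 2"
  have "2 * d = y - x" "2 * m = x + y" unfolding d_m_def by simp_all
  hence "cos (y - x) = cos (2 * d)" by simp
  hence "cos (y - x) = 1 - 2 * (sin d)^2" using cos_double_sin[of d] by simp
  moreover have "cos (x + y) = cos (2 * m)" using \<open>2 * m = x + y\<close> by simp
  hence "cos (x + y) = 1 - 2 * (sin m)^2" using cos_double_sin[of m] by simp
  ultimately have e1: "1 - cos (y - x) = 2 * (sin d)^2" and e2: "1 - cos (x + y) = 2 * (sin m)^2" by simp_all
  have e3: "1 + cos (x + y) = 2 * (cos m)^2" using e2 sin_squared_eq[of m] by simp
  have "a^2 * b^2 * (2 * (sin d)^2) = l * (a^2 * (2 * (sin m)^2) + b^2 * (2 * (cos m)^2))"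
    using assms(5) unfolding Tc_def e1 e2 e3 .
  hence "(sin d)^2 = sfun a b l m" unfolding sfun_def using assms(1,2) by (simp add: field_simps)
  moreover have "sin d > 0" unfolding d_m_def using assms(6,7) by (intro sin_gt_zero) auto
  ultimately have "sin d = sqrt (sfun a b l m)" by (metis abs_of_pos real_sqrt_abs)
  hence "Dfun a b l m = arcsin (sin d)" unfolding Dfun_def by simp
  also have "\<dots> = d" using assms(6,7) unfolding d_m_def by (intro arcsin_sin) auto
  finally show ?thesis unfolding d_m_def by simp
qed



lemma key_ineq:
  fixes a b l u v :: real
  assumes "a > b" "b > 0" "l > 0" "l < b^2" "u \<ge> 0" "v \<ge> 0" "u + v = 1"
  shows "l^2 * (a^2 - b^2)^2 * u * v < l * (a^2 * u + b^2 * v) * (a^2 * b^2 - l * (a^2 * u + b^2 * v))"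
proof -
  define H where "H = a^2 * u + b^2 * v"
  have iden: "(a^2 - b^2)^2 * u * v + H^2 = a^4 * u + b^4 * v"
  proof -
    have vv: "v = 1 - u" using assms by simp
    show ?thesis unfolding H_def vv by (simp add: algebra_simps power2_eq_square power4_eq_xxxx)
  qed
  have pos: "a^4 * u + b^4 * v > 0"
  proof -
    have "a^4 > 0" "b^4 > 0" using assms by simp_all
    moreover have "u > 0 \<or> v > 0" using assms by linarith
    ultimately show ?thesis using assms(5,6)
      by (auto intro: add_pos_nonneg add_nonneg_pos)
  qed
  have ba: "b^2 \<le> a^2" using assms by (simp add: power_mono)
  have "l * (a^4 * u + b^4 * v) < b^2 * (a^4 * u + b^4 * v)" using pos assms by simp
  also have "\<dots> \<le> a^2 * b^2 * H"
  proof -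
    have "b^2 * b^4 \<le> a^2 * b^4" by (rule mult_right_mono[OF ba]) simp
    hence "b^2 * b^4 * v \<le> a^2 * b^4 * v" using assms(6) by (rule mult_right_mono)
    thus ?thesis unfolding H_def by (simp add: algebra_simps power2_eq_square power4_eq_xxxx)
  qed
  finally have "l * ((a^2 - b^2)^2 * u * v + H^2) < a^2 * b^2 * H" unfolding iden .
  hence "l * (l * ((a^2 - b^2)^2 * u * v + H^2)) < l * (a^2 * b^2 * H)" using assms by simp
  thus ?thesis unfolding H_def[symmetric] by (simp add: algebra_simps power2_eq_square)
qed

definition sd :: "real \<Rightarrow> real \<Rightarrow> real \<Rightarrow> real \<Rightarrow> real" where
  "sd a b l m = 2 * l * (a^2 - b^2) * sin m * cos m / (a^2 * b^2)"

lemma s_deriv: "(sfun a b l has_real_derivative sd a b l m) (at m)"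
proof -
  have "((\<lambda>m. l * (a^2 * (sin m)^2 + b^2 * (cos m)^2)) has_real_derivative
     l * (a^2 * (2 * sin m * cos m) + b^2 * (2 * cos m * (- sin m)))) (at m)"
    by (auto intro!: derivative_eq_intros simp: power2_eq_square)
  moreover have eqv: "l * (a^2 * (2 * sin m * cos m) + b^2 * (2 * cos m * (- sin m))) = 2 * l * (a^2 - b^2) * sin m * cos m"
    by (simp add: algebra_simps)
  ultimately have "((\<lambda>m. l * (a^2 * (sin m)^2 + b^2 * (cos m)^2)) has_real_derivative
     2 * l * (a^2 - b^2) * sin m * cos m) (at m)" by (simp only: eqv)
  from DERIV_cdivide[OF this, of "a^2 * b^2"]
  show ?thesis unfolding sfun_def[abs_def] sd_def .
qed

lemma sd_bound:
  assumes "a > b" "b > 0" "l > 0" "l < b^2"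
  shows "(sd a b l m)^2 < 4 * sfun a b l m * (1 - sfun a b l m)"
proof -
  define u v where "u = (sin m)^2" "v = (cos m)^2"
  have uv: "u \<ge> 0" "v \<ge> 0" "u + v = 1" unfolding u_v_def by simp_all
  have ab0: "a^2 * b^2 > 0" using assms by simp
  note K = key_ineq[OF assms uv]
  have e1: "(sd a b l m)^2 = 4 * (l^2 * (a^2 - b^2)^2 * u * v) / (a^2 * b^2)^2"
    unfolding sd_def u_v_def by (simp add: power_mult_distrib power_divide)
  have gen: "4 * (X / Y) * (1 - X / Y) = 4 * (X * (Y - X)) / Y^2" if "Y > 0" for X Y :: real
    using that by (simp add: field_simps power2_eq_square)
  have e2: "4 * sfun a b l m * (1 - sfun a b l m) = 4 * (l * (a^2 * u + b^2 * v) * (a^2 * b^2 - l * (a^2 * u + b^2 * v))) / (a^2 * b^2)^2"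
    unfolding sfun_def by (subst gen[OF ab0]) (simp add: u_v_def mult.assoc)
  have "4 * (l^2 * (a^2 - b^2)^2 * u * v) < 4 * (l * (a^2 * u + b^2 * v) * (a^2 * b^2 - l * (a^2 * u + b^2 * v)))"
    using K by simp
  moreover have "(a^2 * b^2)^2 > 0" using assms by simp
  ultimately show ?thesis unfolding e1 e2 by (rule divide_strict_right_mono)
qed



lemma D_deriv:
  assumes "a > b" "b > 0" "l > 0" "l < b^2"
  shows "\<exists>Dd. (Dfun a b l has_real_derivative Dd) (at m) \<and> \<bar>Dd\<bar> < 1"
proof -
  define S where "S = sfun a b l m"
  have S0: "0 < S" and S1: "S < 1" unfolding S_def using s_bounds[OF assms] by auto
  have d1: "(sqrt has_real_derivative inverse (sqrt S) / 2) (at S)" using S0 by (rule DERIV_real_sqrt)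
  have sq: "(sqrt S)^2 = S" using S0 by simp
  have "sqrt S < 1" using S0 S1 by simp
  moreover have "sqrt S > 0" using S0 by simp
  ultimately have d2: "(arcsin has_real_derivative inverse (sqrt (1 - (sqrt S)^2))) (at (sqrt S))"
    by (intro DERIV_arcsin) linarith+
  have d3: "((\<lambda>m. sqrt (sfun a b l m)) has_real_derivative inverse (sqrt S) / 2 * sd a b l m) (at m)"
    using DERIV_chain'[OF s_deriv d1[unfolded S_def]] unfolding S_def by simp
  have d4: "(Dfun a b l has_real_derivative inverse (sqrt (1 - S)) * (inverse (sqrt S) / 2 * sd a b l m)) (at m)"
    using DERIV_chain'[OF d3 d2[unfolded sq, unfolded S_def]] unfolding Dfun_def[abs_def] S_def by simp
  define Dd where "Dd = inverse (sqrt (1 - S)) * (inverse (sqrt S) / 2 * sd a b l m)"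
  have pos: "sqrt (1 - S) > 0" "sqrt S > 0" using S0 S1 by auto
  have "\<bar>sd a b l m\<bar> < 2 * sqrt S * sqrt (1 - S)"
  proof (rule power2_less_imp_less)
    show "0 \<le> 2 * sqrt S * sqrt (1 - S)" using pos by simp
    have "(2 * sqrt S * sqrt (1 - S))^2 = 4 * S * (1 - S)" using S0 S1
      by (simp add: power_mult_distrib)
    thus "\<bar>sd a b l m\<bar>^2 < (2 * sqrt S * sqrt (1 - S))^2"
      using sd_bound[OF assms, of m] unfolding S_def by simp
  qed
  hence "\<bar>Dd\<bar> < 1" unfolding Dd_def using pos
    by (simp add: abs_mult field_simps)
  thus ?thesis using d4 unfolding Dd_def by blast
qed

lemma D_mono:
  assumes "a > b" "b > 0" "l > 0" "l < b^2" "m1 < m2"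
  shows "m1 + Dfun a b l m1 < m2 + Dfun a b l m2" "m1 - Dfun a b l m1 < m2 - Dfun a b l m2"
proof -
  show "m1 + Dfun a b l m1 < m2 + Dfun a b l m2"
  proof (rule DERIV_pos_imp_increasing[OF assms(5)])
    fix x
    obtain Dd where "(Dfun a b l has_real_derivative Dd) (at x)" "\<bar>Dd\<bar> < 1" using D_deriv[OF assms(1-4)] by blast
    hence "((\<lambda>m. m + Dfun a b l m) has_real_derivative 1 + Dd) (at x) \<and> 1 + Dd > 0"
      by (auto intro!: derivative_eq_intros)
    thus "\<exists>y. ((\<lambda>m. m + Dfun a b l m) has_real_derivative y) (at x) \<and> y > 0" by blast
  qed
  show "m1 - Dfun a b l m1 < m2 - Dfun a b l m2"
  proof (rule DERIV_pos_imp_increasing[OF assms(5)])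
    fix x
    obtain Dd where "(Dfun a b l has_real_derivative Dd) (at x)" "\<bar>Dd\<bar> < 1" using D_deriv[OF assms(1-4)] by blast
    hence "((\<lambda>m. m - Dfun a b l m) has_real_derivative 1 - Dd) (at x) \<and> 1 - Dd > 0"
      by (auto intro!: derivative_eq_intros)
    thus "\<exists>y. ((\<lambda>m. m - Dfun a b l m) has_real_derivative y) (at x) \<and> y > 0" by blast
  qed
qed



definition Rr :: "real \<Rightarrow> real \<Rightarrow> real \<Rightarrow> real \<Rightarrow> real \<Rightarrow> bool" where
  "Rr a b l x y \<longleftrightarrow> Tc a b l x y \<and> 0 < y - x \<and> y - x < pi"

lemma R_mono:
  assumes ab: "a > b" "b > 0" "l > 0" "l < b^2"
    and R1: "Rr a b l x y" and R2: "Rr a b l x' y'"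
  shows "x < x' \<Longrightarrow> y < y'" and "x = x' \<Longrightarrow> y = y'"
proof -
  define m m' where "m = (x + y) / 2" "m' = (x' + y') / 2"
  have "(y - x) / 2 = Dfun a b l m" using Tc_D[OF ab] R1 unfolding Rr_def m_m'_def by blast
  hence ex: "x = m - Dfun a b l m" and ey: "y = m + Dfun a b l m" unfolding m_m'_def by (simp_all add: field_simps)
  have "(y' - x') / 2 = Dfun a b l m'" using Tc_D[OF ab] R2 unfolding Rr_def m_m'_def by blast
  hence ex': "x' = m' - Dfun a b l m'" and ey': "y' = m' + Dfun a b l m'" unfolding m_m'_def by (simp_all add: field_simps)
  note DM = D_mono[OF ab]
  show "y < y'" if "x < x'"
  proof -
    have "m < m'"
    proof (rule ccontr)
      assume "\<not> m < m'"
      hence "m' < m \<or> m' = m" by auto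
      thus False
      proof
        assume "m' < m" from DM(2)[OF this] show False using that ex ex' by simp
      next
        assume "m' = m" thus False using that ex ex' by simp
      qed
    qed
    from DM(1)[OF this] show ?thesis using ey ey' by simp
  qed
  show "y = y'" if "x = x'"
  proof -
    have "m = m'"
    proof (rule ccontr)
      assume "m \<noteq> m'"
      hence "m' < m \<or> m < m'" by auto
      thus False
      proof
        assume "m' < m" from DM(2)[OF this] show False using that ex ex' by simp
      next
        assume "m < m'" from DM(2)[OF this] show False using that ex ex' by simp
      qed
    qed
    thus ?thesis using ey ey' by simp
  qed
qed

lemma int_mono_from_step:
  fixes f :: "int \<Rightarrow> real"
  assumes "\<And>n. f n < f (n + 1)" "m < n"
  shows "f m < f n"
  using assms(2)
proof (induction n rule: int_gr_induct)
  case base thus ?case using assms(1) by simp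
next
  case (step i) thus ?case using assms(1)[of i] by linarith
qed

lemma find_interval:
  fixes f :: "int \<Rightarrow> real"
  assumes "lo < hi" "f lo \<le> v" "v < f hi"
  shows "\<exists>k. lo \<le> k \<and> k < hi \<and> f k \<le> v \<and> v < f (k + 1)"
  using assms(1,3)
proof (induction hi rule: int_gr_induct)
  case base thus ?case using assms(2) by auto
next
  case (step i)
  show ?case
  proof (cases "v < f i")
    case True
    from step.IH[OF True] obtain k where "lo \<le> k \<and> k < i \<and> f k \<le> v \<and> v < f (k + 1)" by blast
    thus ?thesis by (intro exI[of _ k]) auto
  next
    case False
    thus ?thesis using step by (intro exI[of _ i]) auto
  qed
qed

lemma inv_neg: "inversion (- f) (- p) = - inversion f p"
proof -
  have "(fst f - fst p)^2 = (fst p - fst f)^2" "(snd f - snd p)^2 = (snd p - snd f)^2"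
    by (simp_all add: power2_commute)
  thus ?thesis unfolding inversion_def by (simp add: algebra_simps)
qed

lemma area_neg_shift:
  fixes W :: "nat \<Rightarrow> pt"
  assumes "N > 0"
  shows "signed_area N (\<lambda>i. - W ((i + M) mod N)) = signed_area N W"
proof -
  define g where "g j = fst (W j) * snd (W (Suc j mod N)) - fst (W (Suc j mod N)) * snd (W j)" for j
  have sh: "Suc ((i + M) mod N) mod N = (Suc i mod N + M) mod N" for i
    by (simp add: mod_Suc_eq mod_add_left_eq)
  have "signed_area N (\<lambda>i. - W ((i + M) mod N)) = (1/2) * (\<Sum>i<N. g ((i + M) mod N))"
    unfolding signed_area_def g_def by (simp add: sh)
  also have "(\<Sum>i<N. g ((i + M) mod N)) = (\<Sum>j<N. g j)"
  proof -
    let ?h = "\<lambda>i. (i + M) mod N"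
    have inj: "inj_on ?h {..<N}"
    proof (rule inj_onI)
      fix i j assume "i \<in> {..<N}" "j \<in> {..<N}" "?h i = ?h j"
      hence "(i + M) mod N = (j + M) mod N" "i < N" "j < N" by auto
      have k: "(x + M + (N - M mod N)) mod N = x mod N" for x
      proof -
        have "M mod N < N" using assms by simp
        moreover have "M div N * N + M mod N = M" by (rule div_mult_mod_eq)
        ultimately have "x + M + (N - M mod N) = x + (M div N * N + N)" by linarith
        hence "x + M + (N - M mod N) = x + (M div N + 1) * N" by (simp add: algebra_simps)
        hence "(x + M + (N - M mod N)) mod N = (x + (M div N + 1) * N) mod N" by (rule arg_cong)
        also have "\<dots> = x mod N" by (rule mod_mult_self1)
        finally show ?thesis .
      qed
      have "i mod N = ((i + M) mod N + (N - M mod N)) mod N" using k[of i] by (simp add: mod_add_left_eq)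
      also have "\<dots> = ((j + M) mod N + (N - M mod N)) mod N" using \<open>(i + M) mod N = (j + M) mod N\<close> by simp
      also have "\<dots> = j mod N" using k[of j] by (simp add: mod_add_left_eq)
      finally have "i mod N = j mod N" .
      thus "i = j" using \<open>i < N\<close> \<open>j < N\<close> by simp
    qed
    have sub: "?h ` {..<N} \<subseteq> {..<N}" using assms by auto
    have img: "?h ` {..<N} = {..<N}"
      using endo_inj_surj[OF finite_lessThan sub inj] .
    have "(\<Sum>j<N. g j) = (\<Sum>j\<in>?h ` {..<N}. g j)" using img by simp
    also have "\<dots> = (\<Sum>i<N. g (?h i))" using sum.reindex[OF inj] by simp
    finally show ?thesis by simp
  qed
  finally show ?thesis unfolding signed_area_def g_def by simp
qed



lemma area_cong:
  assumes "N > 0" "\<And>i. i < N \<Longrightarrow> W i = V i"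
  shows "signed_area N W = signed_area N V"
  unfolding signed_area_def using assms by (intro arg_cong[where f="\<lambda>x. (1/2) * x"] sum.cong) auto

theorem mainTheorem4:
  fixes a b :: real and N :: nat and P :: "nat \<Rightarrow> real \<times> real"
  assumes "a > b" and "b > 0"
    and "even N" and "N \<ge> 4"
    and "billiard_trajectory a b N P"
  shows "signed_area N (\<lambda>i. inversion (focus1 a b) (P i))
       = signed_area N (\<lambda>i. inversion (focus2 a b) (P i))"
proof -
  from assms(5) obtain \<theta> l where
    neq: "\<forall>i<N. P i \<noteq> P (Suc i mod N)" and
    thP: "\<forall>i<N. P i = (a * cos (\<theta> i), b * sin (\<theta> i))" and
    thinc: "\<forall>i. Suc i < N \<longrightarrow> \<theta> i < \<theta> (Suc i)" and
    thwrap: "\<theta> (N - 1) < \<theta> 0 + 2 * pi" and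
    l: "l < b^2" and
    tan: "\<forall>i<N. line_tangent_ellipse (a^2 - l) (b^2 - l) (P i) (P (Suc i mod N))"
    unfolding billiard_trajectory_def by blast
  have Npos: "N > 0" and Nint: "int N > 0" using assms(4) by auto
  define \<Theta> where "\<Theta> n = \<theta> (nat (n mod int N)) + 2 * pi * of_int (n div int N)" for n :: int
  have F1: "\<Theta> (n + int N) = \<Theta> n + 2 * pi" for n
    unfolding \<Theta>_def using Nint by (simp add: algebra_simps)
  have F4: "P (nat (n mod int N)) = (a * cos (\<Theta> n), b * sin (\<Theta> n))" for n
  proof -
    have "nat (n mod int N) < N" using Nint by (simp add: nat_less_iff)
    hence "P (nat (n mod int N)) = (a * cos (\<theta> (nat (n mod int N))), b * sin (\<theta> (nat (n mod int N))))"
      using thP by blast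
    thus ?thesis unfolding \<Theta>_def by (simp add: cos_add sin_add)
  qed
  have F2: "\<Theta> n < \<Theta> (n + 1)" for n
  proof -
    define r q where "r = n mod int N" "q = n div int N"
    have r0: "0 \<le> r" "r < int N" unfolding r_q_def using Nint by auto
    have nq: "q * int N + r = n" unfolding r_q_def by simp
    have dm: "((n + 1) div int N) * int N + (n + 1) mod int N = n + 1" by simp
    show ?thesis
    proof (cases "r + 1 < int N")
      case True
      have "(n + 1) mod int N = (r + 1) mod int N" unfolding r_q_def by (simp add: mod_add_left_eq)
      also have "\<dots> = r + 1" using True r0 by (intro mod_pos_pos_trivial) auto
      finally have m1: "(n + 1) mod int N = r + 1" .
      hence "((n + 1) div int N) * int N = q * int N" using dm nq by linarith
      hence d1: "(n + 1) div int N = q" using Nint by simp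
      have "int (Suc (nat r)) = r + 1" using r0 by simp
      hence "Suc (nat r) < N" using True by linarith
      hence "\<theta> (nat r) < \<theta> (Suc (nat r))" using thinc by blast
      moreover have "nat (r + 1) = Suc (nat r)" using r0 by simp
      ultimately show ?thesis unfolding \<Theta>_def using m1 d1 by (simp add: r_q_def)
    next
      case False
      hence rN: "r + 1 = int N" using r0 by simp
      have "(n + 1) mod int N = (r + 1) mod int N" unfolding r_q_def by (simp add: mod_add_left_eq)
      hence m1: "(n + 1) mod int N = 0" using rN by simp
      hence "((n + 1) div int N) * int N = (q + 1) * int N" using dm nq rN by (simp add: algebra_simps)
      hence d1: "(n + 1) div int N = q + 1" using Nint by simp
      have "nat r = N - 1" using rN by simp
      hence "\<theta> (nat r) < \<theta> 0 + 2 * pi" using thwrap by simp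
      thus ?thesis unfolding \<Theta>_def using m1 d1 by (simp add: r_q_def algebra_simps)
    qed
  qed
  have F3: "m < n \<Longrightarrow> \<Theta> m < \<Theta> n" for m n using int_mono_from_step[of \<Theta>, OF F2] by blast
  have F3lt: "\<Theta> m < \<Theta> n \<longleftrightarrow> m < n" for m n
  proof
    assume h: "\<Theta> m < \<Theta> n"
    show "m < n"
    proof (rule ccontr)
      assume "\<not> m < n"
      hence "n < m \<or> n = m" by auto
      thus False using F3[of n m] h by auto
    qed
  qed (rule F3)
  have F3le: "\<Theta> m \<le> \<Theta> n \<longleftrightarrow> m \<le> n" for m n using F3lt[of n m] by linarith
  have F5: "Tc a b l (\<Theta> n) (\<Theta> (n + 1)) \<and> cos (\<Theta> (n + 1) - \<Theta> n) < 1" for n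
  proof -
    define i where "i = nat (n mod int N)"
    have iN: "i < N" unfolding i_def using Nint by (simp add: nat_less_iff)
    have "int (Suc i mod N) = (int i + 1) mod int N" by (simp add: of_nat_mod add.commute)
    also have "\<dots> = (n + 1) mod int N" unfolding i_def using Nint by (simp add: mod_add_left_eq)
    finally have si: "Suc i mod N = nat ((n + 1) mod int N)" by simp
    have Pi: "P i = (a * cos (\<Theta> n), b * sin (\<Theta> n))" unfolding i_def by (rule F4)
    have Ps: "P (Suc i mod N) = (a * cos (\<Theta> (n + 1)), b * sin (\<Theta> (n + 1)))" unfolding si by (rule F4)
    have "P i \<noteq> P (Suc i mod N)" "line_tangent_ellipse (a^2 - l) (b^2 - l) (P i) (P (Suc i mod N))"
      using neq tan iN by auto
    thus ?thesis using tangent_T[OF assms(1,2) l] unfolding Pi Ps by blast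
  qed
  have lpos: "l > 0" using F5[of 0] Tc_lpos[of a b l] assms(1,2) by auto
  note ab = assms(1,2) lpos l
  have F6: "Rr a b l (\<Theta> n) (\<Theta> (n + 1))" for n
  proof -
    have pos: "0 < \<Theta> (n + 1) - \<Theta> n" using F2[of n] by simp
    have "\<Theta> (n + 1) - \<Theta> n < pi"
    proof (rule ccontr)
      assume "\<not> ?thesis"
      moreover have "\<Theta> (n + 1) - \<Theta> n \<noteq> pi" using Tc_not_pi[OF assms(1,2) l] F5[of n] by blast
      ultimately have big: "\<Theta> (n + 1) - \<Theta> n > pi" by simp
      have T1: "Tc a b l (\<Theta> (n + 1)) (\<Theta> (n + int N))"
        using Tc_swap[OF conjunct1[OF F5[of n]]] F1[of n] by simp
      have "\<Theta> (n + 1) < \<Theta> (n + int N)" using F3lt assms(4) by simp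
      hence R1: "Rr a b l (\<Theta> (n + 1)) (\<Theta> (n + int N))"
        unfolding Rr_def using T1 big F1[of n] by simp
      have "\<Theta> (n + 1 + 1) < \<Theta> (n + int N)" using F3lt assms(4) by simp
      moreover have "0 < \<Theta> (n + 1 + 1) - \<Theta> (n + 1)" using F2[of "n+1"] by simp
      ultimately have "Rr a b l (\<Theta> (n + 1)) (\<Theta> (n + 1 + 1))"
        unfolding Rr_def using F5[of "n+1"] big F1[of n] by simp
      from R_mono(2)[OF ab this R1] have "\<Theta> (n + 1 + 1) = \<Theta> (n + int N)" by simp
      thus False using F3lt[of "n + 1 + 1" "n + int N"] assms(4) by simp
    qed
    thus ?thesis unfolding Rr_def using F5[of n] pos by simp
  qed
  define M where "M = N div 2"
  have NM: "int N = 2 * int M" unfolding M_def using assms(3) by auto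
  define \<phi> where "\<phi> i = \<Theta> (i + int M) - pi" for i
  have R\<phi>: "Rr a b l (\<phi> i) (\<phi> (i + 1))" for i
  proof -
    have "Rr a b l (\<Theta> (i + int M)) (\<Theta> (i + int M + 1))" by (rule F6)
    thus ?thesis unfolding Rr_def \<phi>_def using Tc_shift by (simp add: algebra_simps)
  qed
  have "\<exists>k. - int N \<le> k \<and> k < int N \<and> \<Theta> k \<le> \<phi> 0 \<and> \<phi> 0 < \<Theta> (k + 1)"
  proof (rule find_interval)
    show "- int N < int N" using Nint by simp
    have "\<Theta> (- int N) = \<Theta> 0 - 2 * pi" using F1[of "- int N"] by simp
    moreover have "\<Theta> 0 \<le> \<Theta> (int M)" using F3le by simp
    ultimately show "\<Theta> (- int N) \<le> \<phi> 0" unfolding \<phi>_def using pi_gt_zero by (simp, linarith)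
    have "\<Theta> (int M) < \<Theta> (int N)" using F3lt NM Nint by simp
    thus "\<phi> 0 < \<Theta> (int N)" unfolding \<phi>_def using pi_gt_zero by (simp, linarith)
  qed
  then obtain k where k: "- int N \<le> k" "\<Theta> k \<le> \<phi> 0" "\<phi> 0 < \<Theta> (k + 1)" by blast
  have indn: "\<Theta> (k + int i) \<le> \<phi> (int i) \<and> \<phi> (int i) < \<Theta> (k + int i + 1)" for i :: nat
  proof (induction i)
    case 0 thus ?case using k by simp
  next
    case (Suc i)
    have A1: "\<Theta> (k + int (Suc i)) \<le> \<phi> (int (Suc i))"
    proof (cases "\<Theta> (k + int i) = \<phi> (int i)")
      case True
      from R_mono(2)[OF ab F6[of "k + int i"] R\<phi>[of "int i"] True] show ?thesis by (simp add: ac_simps)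
    next
      case False
      hence "\<Theta> (k + int i) < \<phi> (int i)" using Suc.IH by simp
      from R_mono(1)[OF ab F6[of "k + int i"] R\<phi>[of "int i"] this] show ?thesis by (simp add: ac_simps)
    qed
    have A2: "\<phi> (int (Suc i)) < \<Theta> (k + int (Suc i) + 1)"
      using R_mono(1)[OF ab R\<phi>[of "int i"] F6[of "k + int i + 1"]] Suc.IH by (simp add: ac_simps)
    show ?case using A1 A2 by simp
  qed
  have ind: "0 \<le> i \<Longrightarrow> \<Theta> (k + i) \<le> \<phi> i \<and> \<phi> i < \<Theta> (k + i + 1)" for i :: int
    using indn[of "nat i"] by simp
  define I where "I = int N"
  have I0: "I \<ge> 0" unfolding I_def by simp
  have phiIM: "\<phi> (I + int M) = \<Theta> I + pi"
    unfolding \<phi>_def I_def using F1[of "int N"] NM by (simp add: algebra_simps)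
  have "k \<le> 0"
  proof -
    have "\<Theta> (k + (I + int M)) \<le> \<Theta> I + pi" using ind[of "I + int M"] I0 phiIM by simp
    moreover have "\<Theta> (k + (k + I)) \<le> \<Theta> (k + I + int M) - pi" using ind[of "k + I"] k(1) unfolding I_def \<phi>_def by simp
    ultimately have "\<Theta> (k + (k + I)) \<le> \<Theta> I" by (simp add: algebra_simps)
    thus ?thesis using F3le by simp
  qed
  moreover have "k \<ge> 0"
  proof -
    have "\<Theta> I + pi < \<Theta> (k + (I + int M) + 1)" using ind[of "I + int M"] I0 phiIM by simp
    moreover have "\<Theta> (k + I + 1 + int M) - pi < \<Theta> (k + (k + I + 1) + 1)" using ind[of "k + I + 1"] k(1) unfolding I_def \<phi>_def by simp
    ultimately have "\<Theta> I < \<Theta> (k + (k + I + 1) + 1)" by (simp add: algebra_simps)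
    thus ?thesis using F3lt by simp
  qed
  ultimately have k0: "k = 0" by simp
  have sym: "\<Theta> (int i + int M) = \<Theta> (int i) + pi" for i :: nat
  proof -
    have "\<Theta> (int i) \<le> \<Theta> (int i + int M) - pi" using ind[of "int i"] k0 unfolding \<phi>_def by simp
    moreover have "\<Theta> (int i + int M) \<le> \<Theta> (int i + int M + int M) - pi" using ind[of "int i + int M"] k0 unfolding \<phi>_def by simp
    moreover have "\<Theta> (int i + int M + int M) = \<Theta> (int i) + 2 * pi" using F1[of "int i"] NM by (simp add: algebra_simps)
    ultimately show ?thesis by simp
  qed
  have Psym: "P i = - P ((i + M) mod N)" if "i < N" for i
  proof -
    have e: "(int i + int M) mod int N = int ((i + M) mod N)" by (simp add: of_nat_mod)
    have "nat ((int i + int M) mod int N) = (i + M) mod N" by (simp only: e nat_int)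
    hence "P ((i + M) mod N) = (a * cos (\<Theta> (int i) + pi), b * sin (\<Theta> (int i) + pi))"
      using F4[of "int i + int M"] sym[of i] by simp
    moreover have "P i = (a * cos (\<Theta> (int i)), b * sin (\<Theta> (int i)))"
      using F4[of "int i"] that by simp
    ultimately show ?thesis by simp
  qed
  have f21: "focus2 a b = - focus1 a b" unfolding focus1_def focus2_def by simp
  have "signed_area N (\<lambda>i. inversion (focus2 a b) (P i))
      = signed_area N (\<lambda>i. - inversion (focus1 a b) (P ((i + M) mod N)))"
  proof (rule area_cong[OF Npos])
    fix i assume "i < N"
    hence h: "P i = - P ((i + M) mod N)" by (rule Psym)
    show "inversion (focus2 a b) (P i) = - inversion (focus1 a b) (P ((i + M) mod N))"
      by (simp only: h f21 inv_neg)
  qed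
  also have "\<dots> = signed_area N (\<lambda>i. inversion (focus1 a b) (P i))"
    using area_neg_shift[OF Npos, of "\<lambda>j. inversion (focus1 a b) (P j)" M] by simp
  finally show ?thesis by simp
qed

end
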